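(* In the $L^p$ setting of the context (with $1<p<\infty$), suppose $G$ acts metrically freely. Then for every finite set $F\subset G$ and every family $a_g\in A$, $g\in F$, $$\Big\|\sum_{g\in F}\bar a_gV_g\Big\|_{L(H)}\le\Big\|\sum_{g\in F}a_gT_g\Big\|_{L(D)},$$ i.e. the map $B(A,T_g)\to B(\bar A,V_g)$ determined by $a\mapsto\bar a$, $T_g\mapsto V_g$ is norm decreasing. No amenability of $G$ is assumed.
   Context: Setting: $(\Omega,\mu)$ is a measure space with $\sigma$-additive $\sigma$-finite measure $\mu$, $E$ a Banach space, $G$ a discrete group, $\{\alpha_g\}_{g\in G}$ a group of invertible measurable maps $\Omega\to\Omega$ ($\alpha_{gh}=\alpha_g\circ\alpha_h$, $\alpha_e=\mathrm{id}$) such that $\alpha_g$ and $\alpha_g^{-1}$ preserve $\mu$-null sets. $D=L^p_\mu(\Omega,E)$; $A=L^\infty_\mu(\Omega,L(E))$ acts on $D$ by $(af)(x)=a(x)f(x)$; $(T_gf)(x)=\rho_g(x)^{1/p}f(\alpha_g^{-1}(x))$, where $\rho_g$ is the Radon–Nikodym derivative of the measure $\Delta\mapsto\mu(\alpha_g^{-1}(\Delta))$ with respect to $\mu$ (so $T_g$ is an isometry and $T_gaT_g^{-1}=\hat T_g(a)$ with $\hat T_g(a)(x)=a(\alpha_g^{-1}(x))$). $B(A,T_g)$ is the closed subalgebra of $L(D)$ generated by $A$ and the $T_g$. $G$ acts metrically freely if for every finite $\{g_1,\dots,g_k\}\subset G$ and measurable $\Delta$ with $\mu(\Delta)>0$ there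 is measurable $\Delta'\subset\Delta$, $\mu(\Delta')>0$, with $\mu(\alpha_{g_i}(\Delta')\cap\alpha_{g_j}(\Delta'))=0$ for $i\neq j$. Regular representation: $H=l^p(G,D)$; $(V_{g_0}\xi)(g)=\xi(gg_0)$; $(\bar a\xi)(g)=\hat T_g(a)\xi(g)$; $B(\bar A,V_g)$ is the closed subalgebra of $L(H)$ generated by $\bar A=\{\bar a:a\in A\}$ and the $V_g$. *)

theory Defs
  imports "HOL-Analysis.Analysis"
begin

definition strongly_measurable :: "'a measure \<Rightarrow> ('a \<Rightarrow> 'b::topological_space) \<Rightarrow> bool" where
  "strongly_measurable M f \<longleftrightarrow>
     (\<exists>s :: nat \<Rightarrow> 'a \<Rightarrow> 'b. (\<forall>n. simple_function M (s n)) \<and>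
        (AE x in M. (\<lambda>n. s n x) \<longlonglongrightarrow> f x))"

definition Lp_pow :: "'a measure \<Rightarrow> real \<Rightarrow> ('a \<Rightarrow> 'e::real_normed_vector) \<Rightarrow> ennreal" where
  "Lp_pow M p f = (\<integral>\<^sup>+ x. ennreal (norm (f x) powr p) \<partial>M)"

definition Lp_norm :: "'a measure \<Rightarrow> real \<Rightarrow> ('a \<Rightarrow> 'e::real_normed_vector) \<Rightarrow> ennreal" where
  "Lp_norm M p f = (if Lp_pow M p f = \<infinity> then \<infinity> else ennreal (enn2real (Lp_pow M p f) powr (1 / p)))"

text \<open>D = L^p_mu(Omega, E) (representatives).\<close>
definition LpD :: "'a measure \<Rightarrow> real \<Rightarrow> ('a \<Rightarrow> 'e::real_normed_vector) set" where
  "LpD M p = {f. strongly_measurable M f \<and> Lp_pow M p f < \<infinity>}"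

text \<open>A = L^infinity_mu(Omega, L(E)) (representatives).\<close>
definition LinfA :: "'a measure \<Rightarrow> ('a \<Rightarrow> ('e::real_normed_vector \<Rightarrow>\<^sub>L 'e)) set" where
  "LinfA M = {a. strongly_measurable M a \<and> (\<exists>B. AE x in M. norm (a x) \<le> B)}"

text \<open>H = l^p(G, D): the p-th power of the norm is the sum over G of the p-th powers.\<close>
definition lp_pow_H :: "'a measure \<Rightarrow> real \<Rightarrow> ('g \<Rightarrow> 'a \<Rightarrow> 'e::real_normed_vector) \<Rightarrow> ennreal" where
  "lp_pow_H M p \<xi> = (\<Sum>\<^sub>\<infinity> g\<in>UNIV. Lp_pow M p (\<xi> g))"

definition lp_norm_H :: "'a measure \<Rightarrow> real \<Rightarrow> ('g \<Rightarrow> 'a \<Rightarrow> 'e::real_normed_vector) \<Rightarrow> ennreal" where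
  "lp_norm_H M p \<xi> = (if lp_pow_H M p \<xi> = \<infinity> then \<infinity> else ennreal (enn2real (lp_pow_H M p \<xi>) powr (1 / p)))"

definition lpH :: "'a measure \<Rightarrow> real \<Rightarrow> ('g \<Rightarrow> 'a \<Rightarrow> 'e::real_normed_vector) set" where
  "lpH M p = {\<xi>. (\<forall>g. \<xi> g \<in> LpD M p) \<and> lp_pow_H M p \<xi> < \<infinity>}"

definition opnorm_D :: "'a measure \<Rightarrow> real \<Rightarrow> (('a \<Rightarrow> 'e::real_normed_vector) \<Rightarrow> ('a \<Rightarrow> 'e)) \<Rightarrow> ennreal" where
  "opnorm_D M p S = (SUP f\<in>{f\<in>LpD M p. Lp_norm M p f \<le> 1}. Lp_norm M p (S f))"

definition opnorm_H :: "'a measure \<Rightarrow> real \<Rightarrow> (('g \<Rightarrow> 'a \<Rightarrow> 'e::real_normed_vector) \<Rightarrow> ('g \<Rightarrow> 'a \<Rightarrow> 'e)) \<Rightarrow> ennreal" where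
  "opnorm_H M p S = (SUP \<xi>\<in>{\<xi>\<in>lpH M p. lp_norm_H M p \<xi> \<le> 1}. lp_norm_H M p (S \<xi>))"

text \<open>Group G written additively (type class group_add, not necessarily commutative): gh = g + h,
  e = 0, g^{-1} = - g.  The maps alpha g are invertible with inverse alpha (- g).\<close>

definition rho :: "'a measure \<Rightarrow> ('g::group_add \<Rightarrow> 'a \<Rightarrow> 'a) \<Rightarrow> 'g \<Rightarrow> 'a \<Rightarrow> ennreal" where
  "rho M \<alpha> g = RN_deriv M (distr M M (\<alpha> g))"

definition Top :: "'a measure \<Rightarrow> real \<Rightarrow> ('g::group_add \<Rightarrow> 'a \<Rightarrow> 'a) \<Rightarrow> 'g \<Rightarrow> ('a \<Rightarrow> 'e::real_normed_vector) \<Rightarrow> 'a \<Rightarrow> 'e" where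
  "Top M p \<alpha> g f x = (enn2real (rho M \<alpha> g x) powr (1 / p)) *\<^sub>R f (\<alpha> (- g) x)"

definition S_D :: "'a measure \<Rightarrow> real \<Rightarrow> ('g::group_add \<Rightarrow> 'a \<Rightarrow> 'a) \<Rightarrow> 'g set \<Rightarrow> ('g \<Rightarrow> 'a \<Rightarrow> ('e::real_normed_vector \<Rightarrow>\<^sub>L 'e))
    \<Rightarrow> ('a \<Rightarrow> 'e) \<Rightarrow> 'a \<Rightarrow> 'e" where
  "S_D M p \<alpha> F a f x = (\<Sum>g\<in>F. blinfun_apply (a g x) (Top M p \<alpha> g f x))"

definition Vop :: "'g::group_add \<Rightarrow> ('g \<Rightarrow> 'a \<Rightarrow> 'e) \<Rightarrow> 'g \<Rightarrow> 'a \<Rightarrow> 'e" where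
  "Vop g0 \<xi> g = \<xi> (g + g0)"

definition bar_op :: "('g::group_add \<Rightarrow> 'a \<Rightarrow> 'a) \<Rightarrow> ('a \<Rightarrow> ('e::real_normed_vector \<Rightarrow>\<^sub>L 'e))
    \<Rightarrow> ('g \<Rightarrow> 'a \<Rightarrow> 'e) \<Rightarrow> 'g \<Rightarrow> 'a \<Rightarrow> 'e" where
  "bar_op \<alpha> b \<xi> g x = blinfun_apply (b (\<alpha> (- g) x)) (\<xi> g x)"

definition S_H :: "('g::group_add \<Rightarrow> 'a \<Rightarrow> 'a) \<Rightarrow> 'g set \<Rightarrow> ('g \<Rightarrow> 'a \<Rightarrow> ('e::real_normed_vector \<Rightarrow>\<^sub>L 'e))
    \<Rightarrow> ('g \<Rightarrow> 'a \<Rightarrow> 'e) \<Rightarrow> 'g \<Rightarrow> 'a \<Rightarrow> 'e" where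
  "S_H \<alpha> F a \<xi> h x = (\<Sum>g\<in>F. bar_op \<alpha> (a g) (Vop g \<xi>) h x)"

definition metrically_free :: "'a measure \<Rightarrow> ('g \<Rightarrow> 'a \<Rightarrow> 'a) \<Rightarrow> bool" where
  "metrically_free M \<alpha> \<longleftrightarrow>
    (\<forall>F. finite F \<longrightarrow> (\<forall>\<Delta>\<in>sets M. emeasure M \<Delta> > 0 \<longrightarrow>
       (\<exists>\<Delta>'\<in>sets M. \<Delta>' \<subseteq> \<Delta> \<and> emeasure M \<Delta>' > 0 \<and>
          (\<forall>g\<in>F. \<forall>h\<in>F. g \<noteq> h \<longrightarrow> emeasure M (\<alpha> g ` \<Delta>' \<inter> \<alpha> h ` \<Delta>') = 0))))"

end

theory Submission
  imports Defs
begin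


definition sm :: "'a measure \<Rightarrow> ('a \<Rightarrow> 'b::real_normed_vector) \<Rightarrow> bool" where
  "sm M f \<longleftrightarrow> (\<exists>s. (\<forall>n. simple_function M (s n)) \<and> (\<forall>x\<in>space M. (\<lambda>n. s n x) \<longlonglongrightarrow> f x))"

lemma smI: "(\<And>n. simple_function M (s n)) \<Longrightarrow> (\<And>x. x\<in>space M \<Longrightarrow> (\<lambda>n. s n x) \<longlonglongrightarrow> f x) \<Longrightarrow> sm M f"
  unfolding sm_def by blast

lemma sm_const: "sm M (\<lambda>x. c)"
  by (rule smI[of _ "\<lambda>n x. c"]) auto

lemma sm_compose2:
  assumes "sm M f" "sm M g"
    and "\<And>x u v. x \<in> space M \<Longrightarrow> (\<lambda>n. u n) \<longlonglongrightarrow> f x \<Longrightarrow> (\<lambda>n. v n) \<longlonglongrightarrow> g x \<Longrightarrow> (\<lambda>n. h (u n) (v n)) \<longlonglongrightarrow> h (f x) (g x)"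
  shows "sm M (\<lambda>x. h (f x) (g x))"
proof -
  obtain s where s: "\<And>n. simple_function M (s n)" "\<And>x. x\<in>space M \<Longrightarrow> (\<lambda>n. s n x) \<longlonglongrightarrow> f x"
    using assms(1) unfolding sm_def by blast
  obtain t where t: "\<And>n. simple_function M (t n)" "\<And>x. x\<in>space M \<Longrightarrow> (\<lambda>n. t n x) \<longlonglongrightarrow> g x"
    using assms(2) unfolding sm_def by blast
  show ?thesis
    by (rule smI[of _ "\<lambda>n x. h (s n x) (t n x)"]) (auto intro: simple_function_compose2 s t assms(3))
qed

lemma sm_add: "sm M f \<Longrightarrow> sm M g \<Longrightarrow> sm M (\<lambda>x. f x + g x)"
  by (rule sm_compose2) (auto intro: tendsto_add)

lemma sm_sum: "finite I \<Longrightarrow> (\<And>i. i \<in> I \<Longrightarrow> sm M (f i)) \<Longrightarrow> sm M (\<lambda>x. \<Sum>i\<in>I. f i x)"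
  by (induction I rule: finite_induct) (auto intro: sm_add sm_const)

lemma sm_blinfun: "sm M A \<Longrightarrow> sm M f \<Longrightarrow> sm M (\<lambda>x. blinfun_apply (A x) (f x))"
  by (rule sm_compose2) (auto intro: blinfun.tendsto)

lemma sm_scaleR_sm: "sm M r \<Longrightarrow> sm M f \<Longrightarrow> sm M (\<lambda>x. r x *\<^sub>R f x)"
  by (rule sm_compose2) (auto intro: tendsto_scaleR)

lemma sm_real: fixes r :: "'a \<Rightarrow> real" assumes "r \<in> borel_measurable M" shows "sm M r"
proof -
  from borel_measurable_implies_sequence_metric[OF assms, of 0] obtain s where
    "\<forall>i. simple_function M (s i)" "\<forall>x\<in>space M. (\<lambda>i. s i x) \<longlonglongrightarrow> r x" by blast
  then show ?thesis unfolding sm_def by blast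
qed

lemma sm_scaleR: "r \<in> borel_measurable M \<Longrightarrow> sm M f \<Longrightarrow> sm M (\<lambda>x. r x *\<^sub>R f x)"
  by (intro sm_scaleR_sm sm_real)

lemma sm_comp: assumes T: "T \<in> measurable M M" and f: "sm M f" shows "sm M (\<lambda>x. f (T x))"
proof -
  obtain s where s: "\<And>n. simple_function M (s n)" "\<And>x. x\<in>space M \<Longrightarrow> (\<lambda>n. s n x) \<longlonglongrightarrow> f x"
    using f unfolding sm_def by blast
  show ?thesis
    by (rule smI[of _ "\<lambda>n x. s n (T x)"]) (auto intro: simple_function_comp[OF T] s measurable_space[OF T])
qed

lemma sm_norm: assumes "sm M f" shows "(\<lambda>x. norm (f x)) \<in> borel_measurable M"
proof -
  obtain s where s: "\<And>n. simple_function M (s n)" "\<And>x. x\<in>space M \<Longrightarrow> (\<lambda>n. s n x) \<longlonglongrightarrow> f x"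
    using assms unfolding sm_def by blast
  show ?thesis
  proof (rule borel_measurable_LIMSEQ_metric[of "\<lambda>n x. norm (s n x)"])
    fix n show "(\<lambda>x. norm (s n x)) \<in> borel_measurable M"
      by (rule borel_measurable_simple_function) (rule simple_function_compose1[OF s(1)])
  qed (auto intro: tendsto_norm s)
qed

lemma sm_imp_strongly: "sm M f \<Longrightarrow> strongly_measurable M f"
  unfolding sm_def strongly_measurable_def by (auto intro!: AE_I2)

lemma strongly_imp_sm:
  fixes f :: "'a \<Rightarrow> 'b::banach"
  assumes "strongly_measurable M f"
  shows "\<exists>f'. sm M f' \<and> (AE x in M. f x = f' x)"
proof -
  obtain s where s: "\<And>n. simple_function M (s n)" and ae: "AE x in M. (\<lambda>n. s n x) \<longlonglongrightarrow> f x"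
    using assms unfolding strongly_measurable_def by blast
  define C where "C = {x\<in>space M. Cauchy (\<lambda>n. s n x)}"
  have dm: "{x\<in>space M. dist (s m x) (s n x) < e} \<in> sets M" for m n e
  proof -
    have "simple_function M (\<lambda>x. dist (s m x) (s n x))"
      by (rule simple_function_compose2[OF s s])
    then have "(\<lambda>x. dist (s m x) (s n x)) \<in> borel_measurable M"
      by (rule borel_measurable_simple_function)
    then show ?thesis by measurable
  qed
  have "C = (\<Inter>j. \<Union>N. \<Inter>m\<in>{N..}. \<Inter>n\<in>{N..}. {x\<in>space M. dist (s m x) (s n x) < inverse (real (Suc j))}) \<inter> space M"
    unfolding C_def metric_Cauchy_iff2 by (rule set_eqI, simp, blast)
  also have "\<dots> \<in> sets M"
    using dm by (intro sets.Int sets.countable_INT sets.countable_UN) auto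
  finally have C: "C \<in> sets M" .
  define t where "t n x = (if x \<in> C then s n x else 0)" for n x
  define f' where "f' x = (if x \<in> C then lim (\<lambda>n. s n x) else 0)" for x
  have "sm M f'"
  proof (rule smI[of _ t])
    fix n show "simple_function M (t n)"
      unfolding t_def using C s[of n] by (intro simple_function_If_set) auto
  next
    fix x assume "x \<in> space M"
    show "(\<lambda>n. t n x) \<longlonglongrightarrow> f' x"
    proof (cases "x \<in> C")
      case True
      then have "convergent (\<lambda>n. s n x)" unfolding C_def using Cauchy_convergent_iff by blast
      then show ?thesis using True unfolding t_def f'_def by (simp add: convergent_LIMSEQ_iff)
    qed (simp add: t_def f'_def)
  qed
  moreover have "AE x in M. f x = f' x"
    using ae AE_space
  proof eventually_elim
    case (elim x)
    then have "x \<in> C" unfolding C_def using LIMSEQ_imp_Cauchy by blast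
    then show ?case unfolding f'_def using elim limI by (simp add: limI)
  qed
  ultimately show ?thesis by blast
qed



locale dyn =
  fixes M :: "'a measure" and p :: real and \<alpha> :: "'g::group_add \<Rightarrow> 'a \<Rightarrow> 'a"
  assumes sf: "sigma_finite_measure M" and p1: "1 < p"
    and comp: "\<And>g h. \<alpha> (g + h) = \<alpha> g \<circ> \<alpha> h" and zero: "\<alpha> 0 = id"
    and meas: "\<And>g. \<alpha> g \<in> measurable M M"
    and null: "\<And>g N. N \<in> null_sets M \<Longrightarrow> \<alpha> g -` N \<inter> space M \<in> null_sets M"
begin

lemma comp_pt: "\<alpha> (g + h) x = \<alpha> g (\<alpha> h x)"
  using comp by (simp add: fun_eq_iff)

lemma inv1[simp]: "\<alpha> (-g) (\<alpha> g x) = x"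
  using comp_pt[of "-g" g x] zero by simp

lemma inv2[simp]: "\<alpha> g (\<alpha> (-g) x) = x"
  using comp_pt[of g "-g" x] zero by simp

lemma sp: "x \<in> space M \<Longrightarrow> \<alpha> g x \<in> space M"
  using meas[of g] by (rule measurable_space)

lemma meas'[measurable]: "\<alpha> g \<in> measurable M M"
  by (rule meas)

lemma img: "A \<subseteq> space M \<Longrightarrow> \<alpha> g ` A = \<alpha> (-g) -` A \<inter> space M"
proof safe
  fix x assume "A \<subseteq> space M" "x \<in> A"
  then show "\<alpha> g x \<in> space M" using sp by blast
next
  fix x assume "x \<in> space M" "\<alpha> (-g) x \<in> A"
  then show "x \<in> \<alpha> g ` A" by (metis image_eqI inv2)
qed simp

lemma img_sets: "A \<in> sets M \<Longrightarrow> \<alpha> g ` A \<in> sets M"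
  using img[of A g] sets.sets_into_space[of A M] measurable_sets[OF meas] by simp

lemma img_null: "A \<in> null_sets M \<Longrightarrow> \<alpha> g ` A \<in> null_sets M"
  using img[of A g] null_sets.sets_into_space[of A M] null by simp

lemma AE_comp: assumes "AE x in M. P x" shows "AE x in M. P (\<alpha> g x)"
proof -
  from assms obtain N where N: "{x\<in>space M. \<not> P x} \<subseteq> N" "N \<in> null_sets M"
    by (auto elim!: AE_E simp: null_sets_def)
  have "{x\<in>space M. \<not> P (\<alpha> g x)} \<subseteq> \<alpha> g -` N \<inter> space M"
    using N(1) sp by blast
  moreover have "\<alpha> g -` N \<inter> space M \<in> null_sets M" using null N(2) by blast
  ultimately show ?thesis by (auto intro: AE_I' )
qed

lemma ac: "absolutely_continuous M (distr M M (\<alpha> g))"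
  unfolding absolutely_continuous_def
  using null by (auto simp: null_sets_distr_iff[OF meas])

lemma dens: "density M (rho M \<alpha> g) = distr M M (\<alpha> g)"
  unfolding rho_def using sigma_finite_measure.density_RN_deriv[OF sf ac] by simp

lemma rho_meas[measurable]: "rho M \<alpha> g \<in> borel_measurable M"
  unfolding rho_def by simp

lemma cov: assumes [measurable]: "f \<in> borel_measurable M"
  shows "(\<integral>\<^sup>+x. f (\<alpha> g x) \<partial>M) = (\<integral>\<^sup>+x. rho M \<alpha> g x * f x \<partial>M)"
proof -
  have "(\<integral>\<^sup>+x. f (\<alpha> g x) \<partial>M) = integral\<^sup>N (distr M M (\<alpha> g)) f"
    by (rule nn_integral_distr[symmetric]) simp_all
  also have "\<dots> = integral\<^sup>N (density M (rho M \<alpha> g)) f" by (simp add: dens)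
  also have "\<dots> = (\<integral>\<^sup>+x. rho M \<alpha> g x * f x \<partial>M)"
    by (rule nn_integral_density) simp_all
  finally show ?thesis .
qed

lemma cocycle: "AE x in M. rho M \<alpha> h x * rho M \<alpha> g (\<alpha> (-h) x) = rho M \<alpha> (h+g) x"
proof -
  have eq: "density M (\<lambda>x. rho M \<alpha> h x * rho M \<alpha> g (\<alpha> (-h) x)) = distr M M (\<alpha> (h+g))"
  proof (rule measure_eqI)
    fix A assume "A \<in> sets (density M (\<lambda>x. rho M \<alpha> h x * rho M \<alpha> g (\<alpha> (-h) x)))"
    then have A[measurable]: "A \<in> sets M" by simp
    have "emeasure (density M (\<lambda>x. rho M \<alpha> h x * rho M \<alpha> g (\<alpha> (-h) x))) A
        = (\<integral>\<^sup>+x. rho M \<alpha> h x * (rho M \<alpha> g (\<alpha> (-h) x) * indicator A x) \<partial>M)"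
      by (simp add: emeasure_density mult.assoc)
    also have "\<dots> = (\<integral>\<^sup>+x. rho M \<alpha> g (\<alpha> (-h) (\<alpha> h x)) * indicator A (\<alpha> h x) \<partial>M)"
      by (rule cov[symmetric]) simp
    also have "\<dots> = (\<integral>\<^sup>+x. rho M \<alpha> g x * indicator A (\<alpha> h x) \<partial>M)"
      by simp
    also have "\<dots> = (\<integral>\<^sup>+x. indicator A (\<alpha> h (\<alpha> g x)) \<partial>M)"
      by (rule cov[symmetric]) simp
    also have "\<dots> = (\<integral>\<^sup>+x. indicator (\<alpha> (h+g) -` A \<inter> space M) x \<partial>M)"
      by (rule nn_integral_cong) (auto simp: comp_pt indicator_def)
    also have "\<dots> = emeasure (distr M M (\<alpha> (h+g))) A"
      by (simp add: emeasure_distr)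
    finally show "emeasure (density M (\<lambda>x. rho M \<alpha> h x * rho M \<alpha> g (\<alpha> (-h) x))) A = emeasure (distr M M (\<alpha> (h+g))) A" .
  qed simp
  have "AE x in M. rho M \<alpha> h x * rho M \<alpha> g (\<alpha> (-h) x) = RN_deriv M (distr M M (\<alpha> (h+g))) x"
    by (rule sigma_finite_measure.RN_deriv_unique[OF sf _ eq]) simp
  then show ?thesis unfolding rho_def .
qed

lemma rho0: "AE x in M. rho M \<alpha> 0 x = 1"
proof -
  have "density M (\<lambda>_. 1) = distr M M (\<alpha> 0)"
    by (simp add: zero density_1 id_def)
  then have "AE x in M. 1 = RN_deriv M (distr M M (\<alpha> 0)) x"
    by (rule sigma_finite_measure.RN_deriv_unique[OF sf, rotated]) simp
  then show ?thesis unfolding rho_def by auto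
qed

lemma finpos: "AE x in M. rho M \<alpha> g x \<noteq> 0 \<and> rho M \<alpha> g x \<noteq> \<infinity>"
  using cocycle[of g "-g"] rho0
proof eventually_elim
  case (elim x)
  then have "rho M \<alpha> g x * rho M \<alpha> (- g) (\<alpha> (- g) x) = 1" by simp
  then show ?case by (auto simp: ennreal_top_mult split: if_splits)
qed

definition r :: "'g \<Rightarrow> 'a \<Rightarrow> real" where "r g x = enn2real (rho M \<alpha> g x)"

lemma r_meas[measurable]: "r g \<in> borel_measurable M"
  unfolding r_def by simp

lemma r_nonneg: "0 \<le> r g x" unfolding r_def by simp

lemma r_pos: "AE x in M. 0 < r g x \<and> rho M \<alpha> g x = ennreal (r g x)"
  using finpos[of g]
  by eventually_elim (auto simp: r_def enn2real_positive_iff less_top[symmetric] zero_less_iff_neq_zero)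

lemma r_cocycle: "AE x in M. r h x * r g (\<alpha> (-h) x) = r (h+g) x"
  using cocycle[of h g] by eventually_elim (simp add: r_def enn2real_mult[symmetric])

end


lemma root_le:
  fixes X :: ennreal and n p :: real
  assumes n: "0 \<le> n" and p: "0 < p"
  shows "(if X = \<infinity> then \<infinity> else ennreal (enn2real X powr (1/p))) \<le> ennreal n \<longleftrightarrow> X \<le> ennreal (n powr p)"
proof (cases "X = \<infinity>")
  case True then show ?thesis by (simp add: top_unique)
next
  case False
  then obtain x where x: "X = ennreal x" "0 \<le> x" by (cases X) auto
  have "x powr (1/p) \<le> n \<longleftrightarrow> x \<le> n powr p"
  proof
    assume "x powr (1/p) \<le> n"
    then have "(x powr (1/p)) powr p \<le> n powr p" using p x by (intro powr_mono2) auto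
    then show "x \<le> n powr p" using p x by (simp add: powr_powr)
  next
    assume "x \<le> n powr p"
    then have "x powr (1/p) \<le> (n powr p) powr (1/p)" using p x by (intro powr_mono2) auto
    then show "x powr (1/p) \<le> n" using p n by (simp add: powr_powr)
  qed
  then show ?thesis using x n by (simp add: ennreal_le_iff)
qed

lemma Lp_norm_le_iff: "0 \<le> n \<Longrightarrow> 0 < p \<Longrightarrow> Lp_norm M p f \<le> ennreal n \<longleftrightarrow> Lp_pow M p f \<le> ennreal (n powr p)"
  unfolding Lp_norm_def by (rule root_le)

lemma lp_norm_H_le_iff: "0 \<le> n \<Longrightarrow> 0 < p \<Longrightarrow> lp_norm_H M p f \<le> ennreal n \<longleftrightarrow> lp_pow_H M p f \<le> ennreal (n powr p)"
  unfolding lp_norm_H_def by (rule root_le)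

lemma Lp_norm_le1: "0 < p \<Longrightarrow> Lp_norm M p f \<le> 1 \<longleftrightarrow> Lp_pow M p f \<le> 1"
  using Lp_norm_le_iff[of 1 p M f] by simp

lemma lp_norm_H_le1: "0 < p \<Longrightarrow> lp_norm_H M p f \<le> 1 \<longleftrightarrow> lp_pow_H M p f \<le> 1"
  using lp_norm_H_le_iff[of 1 p M f] by simp

lemma Lp_pow_cong_AE: "AE x in M. norm (f x) = norm (g x) \<Longrightarrow> Lp_pow M p f = Lp_pow M p g"
  unfolding Lp_pow_def by (rule nn_integral_cong_AE) auto

lemma Lp_pow_scale:
  assumes [measurable]: "(\<lambda>x. norm (f x)) \<in> borel_measurable M" and c: "0 \<le> c"
  shows "Lp_pow M p (\<lambda>x. c *\<^sub>R f x) = ennreal (c powr p) * Lp_pow M p f"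
proof -
  have "Lp_pow M p (\<lambda>x. c *\<^sub>R f x) = (\<integral>\<^sup>+x. ennreal (c powr p) * ennreal (norm (f x) powr p) \<partial>M)"
    unfolding Lp_pow_def using c
    by (intro nn_integral_cong) (simp add: powr_mult ennreal_mult)
  also have "\<dots> = ennreal (c powr p) * Lp_pow M p f"
    unfolding Lp_pow_def by (rule nn_integral_cmult) measurable
  finally show ?thesis .
qed

locale dynop = dyn M p \<alpha> for M :: "'a measure" and p and \<alpha> :: "'g::group_add \<Rightarrow> 'a \<Rightarrow> 'a" +
  fixes F :: "'g set" and a :: "'g \<Rightarrow> 'a \<Rightarrow> ('e::banach \<Rightarrow>\<^sub>L 'e)" and n :: real
  assumes finF: "finite F" and aA: "\<And>g. g \<in> F \<Longrightarrow> a g \<in> LinfA M"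
    and n: "0 \<le> n" and Nn: "opnorm_D M p (S_D M p \<alpha> F a) = ennreal n"
begin

definition a' :: "'g \<Rightarrow> 'a \<Rightarrow> ('e \<Rightarrow>\<^sub>L 'e)" where
  "a' g = (SOME f'. sm M f' \<and> (AE x in M. a g x = f' x))"

lemma a'_prop: assumes "g \<in> F" shows "sm M (a' g) \<and> (AE x in M. a g x = a' g x)"
proof -
  have "strongly_measurable M (a g)" using aA[OF assms] unfolding LinfA_def by blast
  from strongly_imp_sm[OF this] show ?thesis unfolding a'_def by (rule someI_ex)
qed

lemma a'_sm: "g \<in> F \<Longrightarrow> sm M (a' g)" using a'_prop by blast
lemma a'_ae: "g \<in> F \<Longrightarrow> AE x in M. a g x = a' g x" using a'_prop by blast

lemma Top_eq: "Top M p \<alpha> g f x = r g x powr (1/p) *\<^sub>R f (\<alpha> (-g) x)"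
  unfolding Top_def r_def ..

lemma Top_sm: "sm M f \<Longrightarrow> sm M (Top M p \<alpha> g f)"
  unfolding Top_eq[abs_def] by (intro sm_scaleR sm_comp[OF meas]) auto

definition SD' :: "('a \<Rightarrow> 'e) \<Rightarrow> 'a \<Rightarrow> 'e" where
  "SD' f x = (\<Sum>g\<in>F. blinfun_apply (a' g x) (Top M p \<alpha> g f x))"

lemma SD'_sm: "sm M f \<Longrightarrow> sm M (SD' f)"
  unfolding SD'_def[abs_def] by (intro sm_sum finF sm_blinfun a'_sm Top_sm)

lemma SD_ae: "AE x in M. S_D M p \<alpha> F a f x = SD' f x"
proof -
  have "AE x in M. \<forall>g\<in>F. a g x = a' g x" by (rule AE_finite_allI[OF finF]) (rule a'_ae)
  then show ?thesis by eventually_elim (simp add: S_D_def SD'_def)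
qed

lemma SD_scale: "S_D M p \<alpha> F a (\<lambda>x. c *\<^sub>R f x) = (\<lambda>x. c *\<^sub>R S_D M p \<alpha> F a f x)"
  by (simp add: fun_eq_iff S_D_def Top_def scaleR_sum_right blinfun.scaleR_right mult.commute)

lemma opbound:
  assumes f: "sm M f" and fin: "Lp_pow M p f < \<infinity>"
  shows "Lp_pow M p (S_D M p \<alpha> F a f) \<le> ennreal (n powr p) * Lp_pow M p f"
proof -
  have p0: "0 < p" using p1 by simp
  have fm[measurable]: "(\<lambda>x. norm (f x)) \<in> borel_measurable M" by (rule sm_norm[OF f])
  have sdm[measurable]: "(\<lambda>x. norm (SD' f x)) \<in> borel_measurable M" by (rule sm_norm[OF SD'_sm[OF f]])
  define Q where "Q = Lp_pow M p (S_D M p \<alpha> F a f)"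
  have Qeq: "Q = Lp_pow M p (SD' f)"
    unfolding Q_def using SD_ae[of f] by (intro Lp_pow_cong_AE) (auto elim!: eventually_mono)
  have key: "ennreal t * Q \<le> ennreal (n powr p)" if t: "0 < t" "ennreal t * Lp_pow M p f \<le> 1" for t
  proof -
    define c where "c = t powr (1/p)"
    have c0: "0 \<le> c" unfolding c_def by simp
    have cp: "c powr p = t" unfolding c_def using t p0 by (simp add: powr_powr)
    have cfm: "sm M (\<lambda>x. c *\<^sub>R f x)" by (intro sm_scaleR f) simp
    have pcf: "Lp_pow M p (\<lambda>x. c *\<^sub>R f x) = ennreal t * Lp_pow M p f"
      using Lp_pow_scale[OF fm c0] cp by simp
    have "(\<lambda>x. c *\<^sub>R f x) \<in> {f\<in>LpD M p. Lp_norm M p f \<le> 1}"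
      using t pcf sm_imp_strongly[OF cfm] p0
      by (auto simp: LpD_def Lp_norm_le1 le_less_trans[OF _ ennreal_one_less_top])
    then have "Lp_norm M p (S_D M p \<alpha> F a (\<lambda>x. c *\<^sub>R f x)) \<le> ennreal n"
      unfolding Nn[symmetric] opnorm_D_def by (rule SUP_upper)
    then have le: "Lp_pow M p (S_D M p \<alpha> F a (\<lambda>x. c *\<^sub>R f x)) \<le> ennreal (n powr p)"
      using Lp_norm_le_iff[OF n p0] by blast
    have "Lp_pow M p (S_D M p \<alpha> F a (\<lambda>x. c *\<^sub>R f x)) = Lp_pow M p (\<lambda>x. c *\<^sub>R SD' f x)"
      unfolding SD_scale by (intro Lp_pow_cong_AE, rule eventually_mono[OF SD_ae[of f]]) simp
    also have "\<dots> = ennreal t * Q"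
      unfolding Qeq using Lp_pow_scale[OF sdm c0] cp by simp
    finally show ?thesis using le by simp
  qed
  obtain P where P: "Lp_pow M p f = ennreal P" "0 \<le> P"
    using fin by (cases "Lp_pow M p f") auto
  show ?thesis
  proof (cases "P = 0")
    case False
    then have Ppos: "0 < P" using P by simp
    have "ennreal (1/P) * Q \<le> ennreal (n powr p)"
      using key[of "1/P"] Ppos P by (simp add: ennreal_mult[symmetric])
    then have "ennreal P * (ennreal (1/P) * Q) \<le> ennreal P * ennreal (n powr p)"
      by (rule mult_left_mono) simp
    moreover have "ennreal P * (ennreal (1/P) * Q) = Q"
      using Ppos by (simp add: mult.assoc[symmetric] ennreal_mult[symmetric])
    ultimately show ?thesis unfolding Q_def using P by (simp add: mult.commute)
  next
    case True
    have k1: "ennreal t * Q \<le> ennreal (n powr p)" if "0 < t" for t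
      using key[of t] that P True by simp
    have "Q \<noteq> \<infinity>" using k1[of 1] by (auto simp: top_unique)
    then obtain q where q: "Q = ennreal q" "0 \<le> q" by (cases Q) auto
    have "q = 0"
    proof (rule ccontr)
      assume "q \<noteq> 0"
      then have qp: "0 < q" using q by simp
      define t where "t = (n powr p + 1) / q"
      have tp: "0 < t" unfolding t_def using qp by (simp add: add_nonneg_pos)
      have "ennreal (t * q) \<le> ennreal (n powr p)"
        using k1[OF tp] q tp qp by (simp add: ennreal_mult[symmetric])
      then have "t * q \<le> n powr p" by (simp add: ennreal_le_iff)
      moreover have "t * q = n powr p + 1" unfolding t_def using qp by simp
      ultimately show False by simp
    qed
    then show ?thesis unfolding Q_def[symmetric] using q by simp
  qed
qed

end


lemma disj_sum_norm:
  fixes v :: "'k \<Rightarrow> 'e::real_normed_vector"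
  assumes L: "finite L" and p: "0 < p"
    and d: "\<And>k k'. k \<in> L \<Longrightarrow> k' \<in> L \<Longrightarrow> k \<noteq> k' \<Longrightarrow> y \<in> A k \<Longrightarrow> y \<notin> A k'"
  shows "norm (\<Sum>k\<in>L. indicator (A k) y *\<^sub>R v k) powr p = (\<Sum>k\<in>L. indicator (A k) y * norm (v k) powr p)"
proof (cases "\<exists>k\<in>L. y \<in> A k")
  case True
  then obtain k where k: "k \<in> L" "y \<in> A k" by blast
  have "(\<Sum>k\<in>L. indicator (A k) y *\<^sub>R v k) = indicator (A k) y *\<^sub>R v k"
  proof -
    have "(\<Sum>k\<in>L - {k}. indicator (A k) y *\<^sub>R v k) = 0"
      using k d by (intro sum.neutral) (auto simp: indicator_def)
    then show ?thesis using sum.remove[OF L k(1), of "\<lambda>k. indicator (A k) y *\<^sub>R v k"] by simp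
  qed
  moreover have "(\<Sum>k\<in>L. indicator (A k) y * norm (v k) powr p) = indicator (A k) y * norm (v k) powr p"
  proof -
    have "(\<Sum>k\<in>L - {k}. indicator (A k) y * norm (v k) powr p) = 0"
      using k d by (intro sum.neutral) (auto simp: indicator_def)
    then show ?thesis using sum.remove[OF L k(1), of "\<lambda>k. indicator (A k) y * norm (v k) powr p"] by simp
  qed
  ultimately show ?thesis using k by simp
next
  case False
  then show ?thesis using p by (simp add: indicator_def)
qed


context dynop begin

definition SH :: "('g \<Rightarrow> 'a \<Rightarrow> 'e) \<Rightarrow> 'g \<Rightarrow> 'a \<Rightarrow> 'e" where
  "SH \<xi> h x = (\<Sum>g\<in>F. blinfun_apply (a' g (\<alpha> (-h) x)) (\<xi> (h+g) x))"

definition cc :: "'g \<Rightarrow> 'a \<Rightarrow> real" where "cc k x = r k x powr (-1/p)"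

definition tf :: "'g set \<Rightarrow> 'a set \<Rightarrow> ('g \<Rightarrow> 'a \<Rightarrow> 'e) \<Rightarrow> 'a \<Rightarrow> 'e" where
  "tf L D \<xi> y = (\<Sum>k\<in>L. indicator (\<alpha> (-k) ` D) y *\<^sub>R (cc k (\<alpha> k y) *\<^sub>R \<xi> k (\<alpha> k y)))"

lemma cc_meas[measurable]: "cc k \<in> borel_measurable M"
  unfolding cc_def by measurable

lemma cc_nonneg: "0 \<le> cc k x" unfolding cc_def by simp

lemma mem_img: "y \<in> \<alpha> (-k) ` D \<longleftrightarrow> \<alpha> k y \<in> D"
  by (metis image_iff inv1 inv2)

lemma ind_img: "indicator (\<alpha> (-k) ` D) y = indicator D (\<alpha> k y)"
  by (simp add: indicator_def mem_img)

lemma cc_r: "0 < r k x \<Longrightarrow> r k x * (cc k x powr p) = 1"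
proof -
  assume r: "0 < r k x"
  have "(r k x powr (-1/p)) powr p = r k x powr ((-1/p) * p)" by (rule powr_powr)
  also have "\<dots> = r k x powr (-1)" using p1 by simp
  also have "\<dots> = 1 / r k x" using r by (simp add: powr_minus_divide)
  finally show ?thesis unfolding cc_def using r by simp
qed

lemma SH_sm: "(\<And>k. sm M (\<xi> k)) \<Longrightarrow> sm M (SH \<xi> h)"
  unfolding SH_def[abs_def]
  by (intro sm_sum finF sm_blinfun sm_comp[OF meas] a'_sm) auto

lemma change:
  assumes D: "D \<in> sets M" and phi[measurable]: "\<phi> \<in> borel_measurable M" and nn: "\<And>x. 0 \<le> \<phi> x"
  shows "(\<integral>\<^sup>+y. ennreal (indicator D (\<alpha> k y) * (cc k (\<alpha> k y) powr p * \<phi> (\<alpha> k y))) \<partial>M)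
       = (\<integral>\<^sup>+x. ennreal (indicator D x * \<phi> x) \<partial>M)"
proof -
  have [measurable]: "D \<in> sets M" by (rule D)
  have "(\<integral>\<^sup>+y. ennreal (indicator D (\<alpha> k y) * (cc k (\<alpha> k y) powr p * \<phi> (\<alpha> k y))) \<partial>M)
     = (\<integral>\<^sup>+x. rho M \<alpha> k x * ennreal (indicator D x * (cc k x powr p * \<phi> x)) \<partial>M)"
    by (rule cov) measurable
  also have "\<dots> = (\<integral>\<^sup>+x. ennreal (indicator D x * \<phi> x) \<partial>M)"
  proof (rule nn_integral_cong_AE)
    show "AE x in M. rho M \<alpha> k x * ennreal (indicator D x * (cc k x powr p * \<phi> x)) = ennreal (indicator D x * \<phi> x)"
      using r_pos[of k]
    proof eventually_elim
      case (elim x)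
      then have "rho M \<alpha> k x * ennreal (indicator D x * (cc k x powr p * \<phi> x))
          = ennreal (r k x * (indicator D x * (cc k x powr p * \<phi> x)))"
        by (simp add: ennreal_mult[symmetric] r_nonneg nn)
      also have "r k x * (indicator D x * (cc k x powr p * \<phi> x)) = (r k x * cc k x powr p) * (indicator D x * \<phi> x)"
        by (simp add: algebra_simps)
      finally show ?case using cc_r[of k x] elim by simp
    qed
  qed
  finally show ?thesis .
qed

lemma tf_sm:
  assumes "D \<in> sets M" "finite L" "\<And>k. k \<in> L \<Longrightarrow> sm M (\<xi> k)"
  shows "sm M (tf L D \<xi>)"
  unfolding tf_def[abs_def] using assms
  by (intro sm_sum sm_scaleR sm_comp[OF meas]) (auto intro!: img_sets borel_measurable_indicator measurable_compose[OF meas cc_meas])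

lemma tf_pow:
  assumes D: "D \<in> sets M" and L: "finite L" and sm: "\<And>k. k \<in> L \<Longrightarrow> sm M (\<xi> k)"
    and disj: "\<And>j j'. j \<in> L \<Longrightarrow> j' \<in> L \<Longrightarrow> j \<noteq> j' \<Longrightarrow> \<alpha> (-j) ` D \<inter> \<alpha> (-j') ` D = {}"
  shows "Lp_pow M p (tf L D \<xi>) = (\<Sum>k\<in>L. \<integral>\<^sup>+x. ennreal (indicator D x * norm (\<xi> k x) powr p) \<partial>M)"
proof -
  have [measurable]: "D \<in> sets M" by (rule D)
  have p0: "0 < p" using p1 by simp
  have pt: "norm (tf L D \<xi> y) powr p = (\<Sum>k\<in>L. indicator D (\<alpha> k y) * (cc k (\<alpha> k y) powr p * norm (\<xi> k (\<alpha> k y)) powr p))" for y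
  proof -
    have "norm (tf L D \<xi> y) powr p = (\<Sum>k\<in>L. indicator (\<alpha> (-k) ` D) y * norm (cc k (\<alpha> k y) *\<^sub>R \<xi> k (\<alpha> k y)) powr p)"
      unfolding tf_def using disj by (intro disj_sum_norm L p0) blast
    then show ?thesis by (simp add: ind_img cc_nonneg powr_mult)
  qed
  have "Lp_pow M p (tf L D \<xi>) = (\<integral>\<^sup>+y. (\<Sum>k\<in>L. ennreal (indicator D (\<alpha> k y) * (cc k (\<alpha> k y) powr p * norm (\<xi> k (\<alpha> k y)) powr p))) \<partial>M)"
    unfolding Lp_pow_def pt by (intro nn_integral_cong) (simp add: sum_ennreal)
  also have "\<dots> = (\<Sum>k\<in>L. \<integral>\<^sup>+y. ennreal (indicator D (\<alpha> k y) * (cc k (\<alpha> k y) powr p * norm (\<xi> k (\<alpha> k y)) powr p)) \<partial>M)"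
  proof (rule nn_integral_sum)
    fix k assume k: "k \<in> L"
    have [measurable]: "(\<lambda>x. norm (\<xi> k x)) \<in> borel_measurable M" by (rule sm_norm[OF sm[OF k]])
    show "(\<lambda>y. ennreal (indicator D (\<alpha> k y) * (cc k (\<alpha> k y) powr p * norm (\<xi> k (\<alpha> k y)) powr p))) \<in> borel_measurable M"
      by measurable
  qed
  also have "\<dots> = (\<Sum>k\<in>L. \<integral>\<^sup>+x. ennreal (indicator D x * norm (\<xi> k x) powr p) \<partial>M)"
  proof (rule sum.cong[OF refl])
    fix k assume k: "k \<in> L"
    have [measurable]: "(\<lambda>x. norm (\<xi> k x)) \<in> borel_measurable M" by (rule sm_norm[OF sm[OF k]])
    show "(\<integral>\<^sup>+y. ennreal (indicator D (\<alpha> k y) * (cc k (\<alpha> k y) powr p * norm (\<xi> k (\<alpha> k y)) powr p)) \<partial>M)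
        = (\<integral>\<^sup>+x. ennreal (indicator D x * norm (\<xi> k x) powr p) \<partial>M)"
      by (rule change[OF D, of "\<lambda>x. norm (\<xi> k x) powr p"]) auto
  qed
  finally show ?thesis .
qed

end


context dynop begin

lemma coef:
  assumes A: "0 < A" and B: "0 < B"
  shows "B powr (1/p) * (A * B) powr (-1/p) = A powr (-1/p)"
proof -
  have "B powr (1/p) * (A * B) powr (-1/p) = A powr (-1/p) * (B powr (1/p) * B powr (-1/p))"
    using A B by (simp add: powr_mult)
  also have "B powr (1/p) * B powr (-1/p) = B powr (1/p + -1/p)" by (rule powr_add[symmetric])
  also have "\<dots> = 1" using B by simp
  finally show ?thesis by simp
qed

lemma tf_at:
  assumes KFL: "h + g \<in> L" and L: "finite L"
    and disj: "\<And>j j'. j \<in> L \<Longrightarrow> j' \<in> L \<Longrightarrow> j \<noteq> j' \<Longrightarrow> \<alpha> (-j) ` D \<inter> \<alpha> (-j') ` D = {}"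
    and inD: "\<alpha> h x \<in> D"
  shows "tf L D \<xi> (\<alpha> (-g) x) = cc (h+g) (\<alpha> h x) *\<^sub>R \<xi> (h+g) (\<alpha> h x)"
proof -
  have e: "\<alpha> (h+g) (\<alpha> (-g) x) = \<alpha> h x" by (simp add: comp_pt)
  have "tf L D \<xi> (\<alpha> (-g) x) = (\<Sum>k\<in>L. if k = h+g then cc (h+g) (\<alpha> h x) *\<^sub>R \<xi> (h+g) (\<alpha> h x) else 0)"
    unfolding tf_def
  proof (rule sum.cong[OF refl])
    fix k assume k: "k \<in> L"
    show "indicator (\<alpha> (-k) ` D) (\<alpha> (-g) x) *\<^sub>R (cc k (\<alpha> k (\<alpha> (-g) x)) *\<^sub>R \<xi> k (\<alpha> k (\<alpha> (-g) x)))
        = (if k = h+g then cc (h+g) (\<alpha> h x) *\<^sub>R \<xi> (h+g) (\<alpha> h x) else 0)"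
    proof (cases "k = h+g")
      case True then show ?thesis using e inD by (simp add: ind_img)
    next
      case False
      have "\<alpha> (-g) x \<in> \<alpha> (-(h+g)) ` D" using e inD by (simp add: mem_img)
      then have "\<alpha> (-g) x \<notin> \<alpha> (-k) ` D" using disj[OF k KFL False] by blast
      then show ?thesis using False by simp
    qed
  qed
  also have "\<dots> = cc (h+g) (\<alpha> h x) *\<^sub>R \<xi> (h+g) (\<alpha> h x)"
    using KFL L by (simp add: sum.delta)
  finally show ?thesis .
qed

lemma SD'_tf:
  assumes KFL: "\<And>g. g \<in> F \<Longrightarrow> h + g \<in> L" and L: "finite L"
    and disj: "\<And>j j'. j \<in> L \<Longrightarrow> j' \<in> L \<Longrightarrow> j \<noteq> j' \<Longrightarrow> \<alpha> (-j) ` D \<inter> \<alpha> (-j') ` D = {}"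
    and inD: "\<alpha> h x \<in> D"
    and cocy: "\<And>g. g \<in> F \<Longrightarrow> r h (\<alpha> h x) * r g x = r (h+g) (\<alpha> h x)"
    and pos1: "0 < r h (\<alpha> h x)" and pos2: "\<And>g. g \<in> F \<Longrightarrow> 0 < r g x"
  shows "SD' (tf L D \<xi>) x = cc h (\<alpha> h x) *\<^sub>R SH \<xi> h (\<alpha> h x)"
proof -
  have "SD' (tf L D \<xi>) x = (\<Sum>g\<in>F. cc h (\<alpha> h x) *\<^sub>R blinfun_apply (a' g x) (\<xi> (h+g) (\<alpha> h x)))"
    unfolding SD'_def
  proof (rule sum.cong[OF refl])
    fix g assume g: "g \<in> F"
    have "Top M p \<alpha> g (tf L D \<xi>) x = (r g x powr (1/p) * cc (h+g) (\<alpha> h x)) *\<^sub>R \<xi> (h+g) (\<alpha> h x)"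
      using tf_at[OF KFL[OF g] L disj inD, of \<xi>] by (simp add: Top_eq)
    also have "r g x powr (1/p) * cc (h+g) (\<alpha> h x) = cc h (\<alpha> h x)"
      unfolding cc_def cocy[OF g, symmetric] by (rule coef[OF pos1 pos2[OF g]])
    finally show "blinfun_apply (a' g x) (Top M p \<alpha> g (tf L D \<xi>) x) = cc h (\<alpha> h x) *\<^sub>R blinfun_apply (a' g x) (\<xi> (h+g) (\<alpha> h x))"
      by (simp add: blinfun.scaleR_right)
  qed
  also have "\<dots> = cc h (\<alpha> h x) *\<^sub>R SH \<xi> h (\<alpha> h x)"
    unfolding SH_def by (simp add: scaleR_sum_right)
  finally show ?thesis .
qed

end


lemma disj_ind_sum_le:
  assumes K: "finite K"
    and d: "\<And>k k'. k \<in> K \<Longrightarrow> k' \<in> K \<Longrightarrow> k \<noteq> k' \<Longrightarrow> x \<in> A k \<Longrightarrow> x \<notin> A k'"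
  shows "(\<Sum>k\<in>K. indicator (A k) x) \<le> (1::real)"
proof (cases "\<exists>k\<in>K. x \<in> A k")
  case True
  then obtain k where k: "k \<in> K" "x \<in> A k" by blast
  have "(\<Sum>k\<in>K - {k}. indicator (A k) x) = (0::real)"
    using k d by (intro sum.neutral) (auto simp: indicator_def)
  then show ?thesis using sum.remove[OF K k(1), of "\<lambda>k. indicator (A k) x :: real"] k by simp
next
  case False
  then show ?thesis by (simp add: indicator_def)
qed

context dynop begin

lemma free_ineq:
  assumes D: "D \<in> sets M" and K: "finite K" and L: "finite L"
    and KFL: "\<And>h g. h \<in> K \<Longrightarrow> g \<in> F \<Longrightarrow> h + g \<in> L"
    and disj: "\<And>j j'. j \<in> K \<union> L \<Longrightarrow> j' \<in> K \<union> L \<Longrightarrow> j \<noteq> j' \<Longrightarrow> \<alpha> (-j) ` D \<inter> \<alpha> (-j') ` D = {}"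
    and sm: "\<And>k. sm M (\<xi> k)"
    and fin: "\<And>k. k \<in> L \<Longrightarrow> Lp_pow M p (\<xi> k) < \<infinity>"
  shows "(\<Sum>h\<in>K. \<integral>\<^sup>+x. ennreal (indicator D x * norm (SH \<xi> h x) powr p) \<partial>M)
     \<le> ennreal (n powr p) * (\<Sum>k\<in>L. \<integral>\<^sup>+x. ennreal (indicator D x * norm (\<xi> k x) powr p) \<partial>M)"
proof -
  have [measurable]: "D \<in> sets M" by (rule D)
  have p0: "0 < p" using p1 by simp
  have disjL: "\<And>j j'. j \<in> L \<Longrightarrow> j' \<in> L \<Longrightarrow> j \<noteq> j' \<Longrightarrow> \<alpha> (-j) ` D \<inter> \<alpha> (-j') ` D = {}"
    using disj by blast
  define f where "f = tf L D \<xi>"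
  have fsm: "sm M f" unfolding f_def by (rule tf_sm[OF D L sm])
  have fpow: "Lp_pow M p f = (\<Sum>k\<in>L. \<integral>\<^sup>+x. ennreal (indicator D x * norm (\<xi> k x) powr p) \<partial>M)"
    unfolding f_def by (rule tf_pow[OF D L sm disjL])
  have ffin: "Lp_pow M p f < \<infinity>"
  proof -
    have "\<forall>k\<in>L. (\<integral>\<^sup>+x. ennreal (indicator D x * norm (\<xi> k x) powr p) \<partial>M) < \<infinity>"
    proof
      fix k assume k: "k \<in> L"
      have "(\<integral>\<^sup>+x. ennreal (indicator D x * norm (\<xi> k x) powr p) \<partial>M) \<le> Lp_pow M p (\<xi> k)"
        unfolding Lp_pow_def by (intro nn_integral_mono) (auto simp: indicator_def)
      then show "(\<integral>\<^sup>+x. ennreal (indicator D x * norm (\<xi> k x) powr p) \<partial>M) < \<infinity>"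
        using fin[OF k] by (rule le_less_trans)
    qed
    then show ?thesis unfolding fpow using L by simp
  qed
  have sdm[measurable]: "(\<lambda>x. norm (SD' f x)) \<in> borel_measurable M" by (rule sm_norm[OF SD'_sm[OF fsm]])
  have "(\<Sum>h\<in>K. \<integral>\<^sup>+x. ennreal (indicator D x * norm (SH \<xi> h x) powr p) \<partial>M)
      = (\<Sum>h\<in>K. \<integral>\<^sup>+x. ennreal (indicator (\<alpha> (-h) ` D) x * norm (SD' f x) powr p) \<partial>M)"
  proof (rule sum.cong[OF refl])
    fix h assume h: "h \<in> K"
    have shm[measurable]: "(\<lambda>x. norm (SH \<xi> h x)) \<in> borel_measurable M" by (rule sm_norm[OF SH_sm[OF sm]])
    have "(\<integral>\<^sup>+x. ennreal (indicator D x * norm (SH \<xi> h x) powr p) \<partial>M)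
        = (\<integral>\<^sup>+x. ennreal (indicator D (\<alpha> h x) * (cc h (\<alpha> h x) powr p * norm (SH \<xi> h (\<alpha> h x)) powr p)) \<partial>M)"
      by (rule change[OF D, symmetric]) auto
    also have "\<dots> = (\<integral>\<^sup>+x. ennreal (indicator (\<alpha> (-h) ` D) x * norm (SD' f x) powr p) \<partial>M)"
    proof (rule nn_integral_cong_AE)
      have c1: "AE x in M. \<forall>g\<in>F. r h (\<alpha> h x) * r g x = r (h+g) (\<alpha> h x)"
      proof (rule AE_finite_allI[OF finF])
        fix g
        show "AE x in M. r h (\<alpha> h x) * r g x = r (h+g) (\<alpha> h x)"
          using AE_comp[OF r_cocycle[of h g], of h] by simp
      qed
      have c2: "AE x in M. 0 < r h (\<alpha> h x)"
        using AE_comp[OF r_pos[of h], of h] by (auto elim!: eventually_mono)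
      have c3: "AE x in M. \<forall>g\<in>F. 0 < r g x"
        by (rule AE_finite_allI[OF finF]) (use r_pos in \<open>auto elim!: eventually_mono\<close>)
      show "AE x in M. ennreal (indicator D (\<alpha> h x) * (cc h (\<alpha> h x) powr p * norm (SH \<xi> h (\<alpha> h x)) powr p))
          = ennreal (indicator (\<alpha> (-h) ` D) x * norm (SD' f x) powr p)"
        using c1 c2 c3
      proof eventually_elim
        case (elim x)
        show ?case
        proof (cases "\<alpha> h x \<in> D")
          case True
          have "SD' f x = cc h (\<alpha> h x) *\<^sub>R SH \<xi> h (\<alpha> h x)"
            unfolding f_def
            by (rule SD'_tf[OF KFL[OF h] L disjL True]) (use elim in auto)
          then show ?thesis using True
            by (simp add: ind_img cc_nonneg powr_mult)
        next
          case False
          then show ?thesis by (simp add: ind_img)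
        qed
      qed
    qed
    finally show "(\<integral>\<^sup>+x. ennreal (indicator D x * norm (SH \<xi> h x) powr p) \<partial>M)
        = (\<integral>\<^sup>+x. ennreal (indicator (\<alpha> (-h) ` D) x * norm (SD' f x) powr p) \<partial>M)" .
  qed
  also have "\<dots> = (\<integral>\<^sup>+x. (\<Sum>h\<in>K. ennreal (indicator (\<alpha> (-h) ` D) x * norm (SD' f x) powr p)) \<partial>M)"
  proof (rule nn_integral_sum[symmetric])
    fix h
    have [measurable]: "\<alpha> (-h) ` D \<in> sets M" by (rule img_sets[OF D])
    show "(\<lambda>x. ennreal (indicator (\<alpha> (-h) ` D) x * norm (SD' f x) powr p)) \<in> borel_measurable M"
      by measurable
  qed
  also have "\<dots> \<le> (\<integral>\<^sup>+x. ennreal (norm (SD' f x) powr p) \<partial>M)"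
  proof (rule nn_integral_mono)
    fix x
    have "(\<Sum>h\<in>K. ennreal (indicator (\<alpha> (-h) ` D) x * norm (SD' f x) powr p))
        = ennreal ((\<Sum>h\<in>K. indicator (\<alpha> (-h) ` D) x) * norm (SD' f x) powr p)"
      by (simp add: sum_ennreal sum_distrib_right)
    also have "\<dots> \<le> ennreal (1 * norm (SD' f x) powr p)"
    proof (intro ennreal_leI mult_right_mono)
      show "(\<Sum>h\<in>K. indicator (\<alpha> (-h) ` D) x) \<le> (1::real)"
        by (rule disj_ind_sum_le[OF K]) (use disj in blast)
    qed simp
    finally show "(\<Sum>h\<in>K. ennreal (indicator (\<alpha> (-h) ` D) x * norm (SD' f x) powr p)) \<le> ennreal (norm (SD' f x) powr p)"
      by simp
  qed
  also have "\<dots> = Lp_pow M p (S_D M p \<alpha> F a f)"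
    unfolding Lp_pow_def by (rule nn_integral_cong_AE) (use SD_ae[of f] in \<open>auto elim!: eventually_mono\<close>)
  also have "\<dots> \<le> ennreal (n powr p) * Lp_pow M p f"
    by (rule opbound[OF fsm ffin])
  finally show ?thesis unfolding fpow .
qed

end


context dynop begin

lemma free_subset:
  assumes mf: "metrically_free M \<alpha>" and J: "finite J" and E: "E \<in> sets M" and Epos: "0 < emeasure M E"
  shows "\<exists>D\<in>sets M. D \<subseteq> E \<and> 0 < emeasure M D \<and>
     (\<forall>j\<in>J. \<forall>j'\<in>J. j \<noteq> j' \<longrightarrow> \<alpha> (-j) ` D \<inter> \<alpha> (-j') ` D = {})"
proof -
  have "finite (uminus ` J)" using J by simp
  then obtain D' where D': "D' \<in> sets M" "D' \<subseteq> E" "0 < emeasure M D'"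
    and fr0: "\<forall>g\<in>uminus ` J. \<forall>h\<in>uminus ` J. g \<noteq> h \<longrightarrow> emeasure M (\<alpha> g ` D' \<inter> \<alpha> h ` D') = 0"
    using mf[unfolded metrically_free_def, rule_format, of "uminus ` J" E] E Epos by blast
  have fr: "\<And>g h. g \<in> uminus ` J \<Longrightarrow> h \<in> uminus ` J \<Longrightarrow> g \<noteq> h \<Longrightarrow> emeasure M (\<alpha> g ` D' \<inter> \<alpha> h ` D') = 0"
    using fr0 by blast
  define X where "X j j' = \<alpha> (-j) ` D' \<inter> \<alpha> (-j') ` D'" for j j'
  define Z where "Z = (\<Union>j\<in>J. \<Union>j'\<in>J - {j}. \<alpha> j ` X j j')"
  have Xn: "X j j' \<in> null_sets M" if "j \<in> J" "j' \<in> J" "j \<noteq> j'" for j j'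
  proof -
    have "X j j' \<in> sets M" unfolding X_def using D' by (intro sets.Int img_sets)
    moreover have "emeasure M (X j j') = 0" unfolding X_def using that by (intro fr) auto
    ultimately show ?thesis by (rule null_setsI[rotated])
  qed
  have Zn: "Z \<in> null_sets M"
    unfolding Z_def
  proof (rule null_sets_UN'[OF countable_finite[OF J]])
    fix j assume j: "j \<in> J"
    show "(\<Union>j'\<in>J - {j}. \<alpha> j ` X j j') \<in> null_sets M"
    proof (rule null_sets_UN'[OF countable_finite])
      show "finite (J - {j})" using J by simp
      fix j' assume "j' \<in> J - {j}"
      then show "\<alpha> j ` X j j' \<in> null_sets M" using j by (intro img_null Xn) auto
    qed
  qed
  define D where "D = D' - Z"
  have Ds: "D \<in> sets M" unfolding D_def using D' Zn by auto
  have Dm: "emeasure M D = emeasure M D'" unfolding D_def by (rule emeasure_Diff_null_set[OF Zn D'(1)])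
  have "\<alpha> (-j) ` D \<inter> \<alpha> (-j') ` D = {}" if j: "j \<in> J" "j' \<in> J" "j \<noteq> j'" for j j'
  proof (rule ccontr)
    assume "\<alpha> (-j) ` D \<inter> \<alpha> (-j') ` D \<noteq> {}"
    then obtain y where y1: "y \<in> \<alpha> (-j) ` D" and y2: "y \<in> \<alpha> (-j') ` D" by blast
    then obtain d where d: "d \<in> D" "y = \<alpha> (-j) d" by blast
    have "y \<in> X j j'" unfolding X_def using y1 y2 D_def by blast
    then have "\<alpha> j y \<in> Z" unfolding Z_def using j by blast
    moreover have "\<alpha> j y = d" using d by simp
    ultimately show False using d D_def by blast
  qed
  moreover have "D \<subseteq> E" unfolding D_def using D' by blast
  moreover have "0 < emeasure M D" using Dm D' by simp
  ultimately show ?thesis using Ds by blast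
qed

end


context dynop begin

lemma global_ineq:
  assumes mf: "metrically_free M \<alpha>" and K: "finite K" and L: "finite L"
    and KFL: "\<And>h g. h \<in> K \<Longrightarrow> g \<in> F \<Longrightarrow> h + g \<in> L"
    and sm: "\<And>k. sm M (\<xi> k)"
    and fin: "\<And>k. k \<in> L \<Longrightarrow> Lp_pow M p (\<xi> k) < \<infinity>"
  shows "(\<integral>\<^sup>+x. (\<Sum>h\<in>K. ennreal (norm (SH \<xi> h x) powr p)) \<partial>M)
     \<le> ennreal (n powr p) * (\<integral>\<^sup>+x. (\<Sum>k\<in>L. ennreal (norm (\<xi> k x) powr p)) \<partial>M)"
proof -
  have shm[measurable]: "\<And>h. (\<lambda>x. norm (SH \<xi> h x)) \<in> borel_measurable M" by (rule sm_norm[OF SH_sm[OF sm]])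
  have xim[measurable]: "\<And>k. (\<lambda>x. norm (\<xi> k x)) \<in> borel_measurable M" by (rule sm_norm[OF sm])
  define U1 where "U1 x = (\<Sum>h\<in>K. ennreal (norm (SH \<xi> h x) powr p))" for x
  define U2 where "U2 x = ennreal (n powr p) * (\<Sum>k\<in>L. ennreal (norm (\<xi> k x) powr p))" for x
  have U1m[measurable]: "U1 \<in> borel_measurable M" unfolding U1_def[abs_def] by measurable
  have U2m[measurable]: "U2 \<in> borel_measurable M" unfolding U2_def[abs_def] by measurable
  have AEle: "AE x in M. U1 x \<le> U2 x"
  proof (rule ccontr)
    assume nAE: "\<not> (AE x in M. U1 x \<le> U2 x)"
    define E where "E = {x\<in>space M. U2 x < U1 x}"
    have Es: "E \<in> sets M" unfolding E_def by measurable
    have Epos: "0 < emeasure M E"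
    proof (rule ccontr)
      assume "\<not> 0 < emeasure M E"
      then have "E \<in> null_sets M" using Es by (simp add: null_sets_def)
      moreover have "{x\<in>space M. \<not> U1 x \<le> U2 x} \<subseteq> E" unfolding E_def by (auto simp: not_le)
      ultimately have "AE x in M. U1 x \<le> U2 x" by (rule AE_I')
      with nAE show False by simp
    qed
    obtain D where D: "D \<in> sets M" "D \<subseteq> E" "0 < emeasure M D"
      and disj0: "\<forall>j\<in>K \<union> L. \<forall>j'\<in>K \<union> L. j \<noteq> j' \<longrightarrow> \<alpha> (-j) ` D \<inter> \<alpha> (-j') ` D = {}"
    proof -
      have "finite (K \<union> L)" using K L by simp
      from free_subset[OF mf this Es Epos] show ?thesis using that by blast
    qed
    have disj: "\<And>j j'. j \<in> K \<union> L \<Longrightarrow> j' \<in> K \<union> L \<Longrightarrow> j \<noteq> j' \<Longrightarrow> \<alpha> (-j) ` D \<inter> \<alpha> (-j') ` D = {}"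
      using disj0 by blast
    have [measurable]: "D \<in> sets M" by (rule D(1))
    define G1 where "G1 x = indicator D x * U1 x" for x
    define G2 where "G2 x = indicator D x * U2 x" for x
    have G1m[measurable]: "G1 \<in> borel_measurable M" unfolding G1_def[abs_def] by measurable
    have G2m[measurable]: "G2 \<in> borel_measurable M" unfolding G2_def[abs_def] by measurable
    have iG1: "integral\<^sup>N M G1 = (\<Sum>h\<in>K. \<integral>\<^sup>+x. ennreal (indicator D x * norm (SH \<xi> h x) powr p) \<partial>M)"
    proof -
      have "integral\<^sup>N M G1 = (\<integral>\<^sup>+x. (\<Sum>h\<in>K. ennreal (indicator D x * norm (SH \<xi> h x) powr p)) \<partial>M)"
        unfolding G1_def U1_def
      proof (rule nn_integral_cong)
        fix x show "indicator D x * (\<Sum>h\<in>K. ennreal (norm (SH \<xi> h x) powr p)) = (\<Sum>h\<in>K. ennreal (indicator D x * norm (SH \<xi> h x) powr p))"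
          by (cases "x \<in> D") simp_all
      qed
      also have "\<dots> = (\<Sum>h\<in>K. \<integral>\<^sup>+x. ennreal (indicator D x * norm (SH \<xi> h x) powr p) \<partial>M)"
        by (rule nn_integral_sum) measurable
      finally show ?thesis .
    qed
    have iG2: "integral\<^sup>N M G2 = ennreal (n powr p) * (\<Sum>k\<in>L. \<integral>\<^sup>+x. ennreal (indicator D x * norm (\<xi> k x) powr p) \<partial>M)"
    proof -
      have "integral\<^sup>N M G2 = (\<integral>\<^sup>+x. ennreal (n powr p) * (\<Sum>k\<in>L. ennreal (indicator D x * norm (\<xi> k x) powr p)) \<partial>M)"
        unfolding G2_def U2_def
      proof (rule nn_integral_cong)
        fix x show "indicator D x * (ennreal (n powr p) * (\<Sum>k\<in>L. ennreal (norm (\<xi> k x) powr p))) = ennreal (n powr p) * (\<Sum>k\<in>L. ennreal (indicator D x * norm (\<xi> k x) powr p))"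
          by (cases "x \<in> D") simp_all
      qed
      also have "\<dots> = ennreal (n powr p) * (\<integral>\<^sup>+x. (\<Sum>k\<in>L. ennreal (indicator D x * norm (\<xi> k x) powr p)) \<partial>M)"
        by (rule nn_integral_cmult) measurable
      also have "(\<integral>\<^sup>+x. (\<Sum>k\<in>L. ennreal (indicator D x * norm (\<xi> k x) powr p)) \<partial>M)
          = (\<Sum>k\<in>L. \<integral>\<^sup>+x. ennreal (indicator D x * norm (\<xi> k x) powr p) \<partial>M)"
        by (rule nn_integral_sum) measurable
      finally show ?thesis .
    qed
    have le: "integral\<^sup>N M G1 \<le> integral\<^sup>N M G2"
      unfolding iG1 iG2 by (rule free_ineq[OF D(1) K L KFL disj sm fin]) auto
    have G2fin: "integral\<^sup>N M G2 \<noteq> \<infinity>"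
    proof -
      have "\<forall>k\<in>L. (\<integral>\<^sup>+x. ennreal (indicator D x * norm (\<xi> k x) powr p) \<partial>M) < \<infinity>"
      proof
        fix k assume k: "k \<in> L"
        have "(\<integral>\<^sup>+x. ennreal (indicator D x * norm (\<xi> k x) powr p) \<partial>M) \<le> Lp_pow M p (\<xi> k)"
          unfolding Lp_pow_def by (intro nn_integral_mono) (auto simp: indicator_def)
        then show "(\<integral>\<^sup>+x. ennreal (indicator D x * norm (\<xi> k x) powr p) \<partial>M) < \<infinity>"
          using fin[OF k] by (rule le_less_trans)
      qed
      then have s: "(\<Sum>k\<in>L. \<integral>\<^sup>+x. ennreal (indicator D x * norm (\<xi> k x) powr p) \<partial>M) < \<infinity>"
        using L by simp
      have "ennreal (n powr p) * (\<Sum>k\<in>L. \<integral>\<^sup>+x. ennreal (indicator D x * norm (\<xi> k x) powr p) \<partial>M) < \<infinity>"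
        using s by (simp add: ennreal_mult_less_top)
      then show ?thesis unfolding iG2 by simp
    qed
    have "integral\<^sup>N M G2 < integral\<^sup>N M G1"
    proof (rule nn_integral_less[OF G2m G1m G2fin])
      show "AE x in M. G2 x \<le> G1 x"
      proof (rule AE_I2)
        fix x assume x: "x \<in> space M"
        show "G2 x \<le> G1 x"
        proof (cases "x \<in> D")
          case True
          then have "U2 x < U1 x" using D(2) unfolding E_def by blast
          then show ?thesis using True unfolding G1_def G2_def by simp
        qed (simp add: G1_def G2_def)
      qed
      show "\<not> (AE x in M. G1 x \<le> G2 x)"
      proof
        assume "AE x in M. G1 x \<le> G2 x"
        then have "AE x in M. x \<notin> D"
        proof (rule eventually_mono)
          fix x assume le: "G1 x \<le> G2 x"
          show "x \<notin> D"
          proof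
            assume xD: "x \<in> D"
            then have "U2 x < U1 x" using D(2) unfolding E_def by blast
            then show False using le xD unfolding G1_def G2_def by simp
          qed
        qed
        then have "emeasure M D = 0"
          using AE_iff_measurable[OF D(1), of "\<lambda>x. x \<notin> D"] sets.sets_into_space[OF D(1)] by auto
        with D(3) show False by simp
      qed
    qed
    with le show False by simp
  qed
  have "(\<integral>\<^sup>+x. U1 x \<partial>M) \<le> (\<integral>\<^sup>+x. U2 x \<partial>M)" by (rule nn_integral_mono_AE[OF AEle])
  also have "\<dots> = ennreal (n powr p) * (\<integral>\<^sup>+x. (\<Sum>k\<in>L. ennreal (norm (\<xi> k x) powr p)) \<partial>M)"
    unfolding U2_def by (rule nn_integral_cmult) measurable
  finally show ?thesis unfolding U1_def .
qed

end


context dynop begin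

lemma main_bound:
  assumes mf: "metrically_free M \<alpha>" and xi: "\<xi> \<in> lpH M p" and xi1: "lp_pow_H M p \<xi> \<le> 1"
  shows "lp_pow_H M p (S_H \<alpha> F a \<xi>) \<le> ennreal (n powr p)"
proof -
  define \<xi>' where "\<xi>' k = (SOME f'. sm M f' \<and> (AE x in M. \<xi> k x = f' x))" for k
  have xprop: "sm M (\<xi>' k) \<and> (AE x in M. \<xi> k x = \<xi>' k x)" for k
  proof -
    have "strongly_measurable M (\<xi> k)" using xi unfolding lpH_def LpD_def by blast
    from strongly_imp_sm[OF this] show ?thesis unfolding \<xi>'_def by (rule someI_ex)
  qed
  have xsm: "\<And>k. sm M (\<xi>' k)" using xprop by blast
  have xae: "\<And>k. AE x in M. \<xi> k x = \<xi>' k x" using xprop by blast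
  have xeq: "Lp_pow M p (\<xi>' k) = Lp_pow M p (\<xi> k)" for k
    by (rule Lp_pow_cong_AE) (use xae[of k] in \<open>auto elim!: eventually_mono\<close>)
  have xfin: "Lp_pow M p (\<xi>' k) < \<infinity>" for k
    unfolding xeq using xi unfolding lpH_def LpD_def by blast
  have xim[measurable]: "\<And>k. (\<lambda>x. norm (\<xi>' k x)) \<in> borel_measurable M" by (rule sm_norm[OF xsm])
  have shm[measurable]: "\<And>h. (\<lambda>x. norm (SH \<xi>' h x)) \<in> borel_measurable M" by (rule sm_norm[OF SH_sm[OF xsm]])
  have SHeq: "Lp_pow M p (S_H \<alpha> F a \<xi> h) = Lp_pow M p (SH \<xi>' h)" for h
  proof (rule Lp_pow_cong_AE)
    have c1: "AE x in M. \<forall>g\<in>F. a g (\<alpha> (-h) x) = a' g (\<alpha> (-h) x)"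
      by (rule AE_finite_allI[OF finF]) (rule AE_comp[OF a'_ae])
    have c2: "AE x in M. \<forall>g\<in>F. \<xi> (h+g) x = \<xi>' (h+g) x"
      by (rule AE_finite_allI[OF finF]) (rule xae)
    show "AE x in M. norm (S_H \<alpha> F a \<xi> h x) = norm (SH \<xi>' h x)"
      using c1 c2 by eventually_elim (simp add: S_H_def bar_op_def Vop_def SH_def)
  qed
  have sup_xi: "(\<Sum>k\<in>L. Lp_pow M p (\<xi> k)) \<le> lp_pow_H M p \<xi>" if L: "finite L" for L
  proof -
    have "lp_pow_H M p \<xi> = (SUP G\<in>{G. finite G \<and> G \<subseteq> UNIV}. \<Sum>k\<in>G. Lp_pow M p (\<xi> k))"
      unfolding lp_pow_H_def by (rule nonneg_infsum_complete) simp
    moreover have "(\<Sum>k\<in>L. Lp_pow M p (\<xi> k)) \<le> (SUP G\<in>{G. finite G \<and> G \<subseteq> UNIV}. \<Sum>k\<in>G. Lp_pow M p (\<xi> k))"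
      by (rule SUP_upper) (simp add: L)
    ultimately show ?thesis by simp
  qed
  have fin_bound: "(\<Sum>h\<in>K. Lp_pow M p (S_H \<alpha> F a \<xi> h)) \<le> ennreal (n powr p)" if K: "finite K" for K
  proof -
    define L where "L = (\<lambda>(h, g). h + g) ` (K \<times> F)"
    have L: "finite L" unfolding L_def using K finF by simp
    have KFL: "h + g \<in> L" if "h \<in> K" "g \<in> F" for h g
      unfolding L_def using that by (intro image_eqI[of _ _ "(h, g)"]) auto
    have "(\<Sum>h\<in>K. Lp_pow M p (S_H \<alpha> F a \<xi> h)) = (\<Sum>h\<in>K. \<integral>\<^sup>+x. ennreal (norm (SH \<xi>' h x) powr p) \<partial>M)"
      unfolding SHeq by (simp add: Lp_pow_def)
    also have "\<dots> = (\<integral>\<^sup>+x. (\<Sum>h\<in>K. ennreal (norm (SH \<xi>' h x) powr p)) \<partial>M)"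
      by (rule nn_integral_sum[symmetric]) measurable
    also have "\<dots> \<le> ennreal (n powr p) * (\<integral>\<^sup>+x. (\<Sum>k\<in>L. ennreal (norm (\<xi>' k x) powr p)) \<partial>M)"
      by (rule global_ineq[OF mf K L KFL xsm xfin])
    also have "(\<integral>\<^sup>+x. (\<Sum>k\<in>L. ennreal (norm (\<xi>' k x) powr p)) \<partial>M) = (\<Sum>k\<in>L. Lp_pow M p (\<xi> k))"
      unfolding xeq[symmetric] unfolding Lp_pow_def by (rule nn_integral_sum) measurable
    also have "ennreal (n powr p) * (\<Sum>k\<in>L. Lp_pow M p (\<xi> k)) \<le> ennreal (n powr p) * 1"
      using sup_xi[OF L] xi1 by (intro mult_left_mono) auto
    finally show ?thesis by simp
  qed
  have "lp_pow_H M p (S_H \<alpha> F a \<xi>) = (SUP G\<in>{G. finite G \<and> G \<subseteq> UNIV}. \<Sum>h\<in>G. Lp_pow M p (S_H \<alpha> F a \<xi> h))"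
    unfolding lp_pow_H_def by (rule nonneg_infsum_complete) simp
  also have "\<dots> \<le> ennreal (n powr p)"
    by (rule SUP_least) (simp add: fin_bound)
  finally show ?thesis .
qed

end

theorem lemma3p2:
  fixes M :: "'a measure" and p :: real
    and \<alpha> :: "'g::group_add \<Rightarrow> 'a \<Rightarrow> 'a"
    and F :: "'g set" and a :: "'g \<Rightarrow> 'a \<Rightarrow> ('e::banach \<Rightarrow>\<^sub>L 'e)"
  assumes "sigma_finite_measure M"
    and "1 < p"
    and "\<And>g h. \<alpha> (g + h) = \<alpha> g \<circ> \<alpha> h"
    and "\<alpha> 0 = id"
    and "\<And>g. \<alpha> g \<in> measurable M M"
    and "\<And>g N. N \<in> null_sets M \<Longrightarrow> \<alpha> g -` N \<inter> space M \<in> null_sets M"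
    and "metrically_free M \<alpha>"
    and "finite F"
    and "\<And>g. g \<in> F \<Longrightarrow> a g \<in> LinfA M"
  shows "opnorm_H M p (S_H \<alpha> F a) \<le> opnorm_D M p (S_D M p \<alpha> F a)"
proof (cases "opnorm_D M p (S_D M p \<alpha> F a) = \<infinity>")
  case True then show ?thesis by simp
next
  case False
  then obtain n where nn: "opnorm_D M p (S_D M p \<alpha> F a) = ennreal n" "0 \<le> n"
    by (cases "opnorm_D M p (S_D M p \<alpha> F a)") auto
  interpret dynop M p \<alpha> F a n
    by (intro dynop.intro dyn.intro dynop_axioms.intro) (fact assms nn)+
  have p0: "0 < p" using assms(2) by simp
  have "opnorm_H M p (S_H \<alpha> F a) \<le> ennreal n"
    unfolding opnorm_H_def
  proof (rule SUP_least)
    fix \<xi> :: "'g \<Rightarrow> 'a \<Rightarrow> 'e" assume "\<xi> \<in> {\<xi> \<in> lpH M p. lp_norm_H M p \<xi> \<le> 1}"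
    then have xi: "\<xi> \<in> lpH M p" and "lp_norm_H M p \<xi> \<le> 1" by auto
    then have xi1: "lp_pow_H M p \<xi> \<le> 1" using lp_norm_H_le1[OF p0] by blast
    show "lp_norm_H M p (S_H \<alpha> F a \<xi>) \<le> ennreal n"
      using main_bound[OF assms(7) xi xi1] lp_norm_H_le_iff[OF nn(2) p0] by blast
  qed
  then show ?thesis using nn by simp
qed


end
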